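(* Let $n=2$ and $a_{12}a_{21}\neq0$. If $\operatorname{ad}X_1$ does not act nilpotently on $X_2$ (i.e. $(\operatorname{ad}X_1)^mX_2\neq0$ for all $m\ge0$), then $\mathfrak g(A)$ has infinite growth.
   Context: Let $I=\{1,2\}$, let $A=(a_{ij})$ be a complex $2\times2$ matrix and $p:I\to\mathbb Z_2$ a parity function. Fix a complex vector space $\mathfrak h$ of dimension $2+\operatorname{corank}(A)$, linearly independent $\alpha_1,\alpha_2\in\mathfrak h^*$ and $h_1,h_2\in\mathfrak h$ with $\alpha_j(h_i)=a_{ij}$. Let $\bar{\mathfrak g}(A)$ be the Lie superalgebra generated by $\mathfrak h$ (even, abelian) and elements $X_i,Y_i$ of parity $p(i)$ subject to $[h,X_i]=\alpha_i(h)X_i$, $[h,Y_i]=-\alpha_i(h)Y_i$, $[X_i,Y_j]=\delta_{ij}h_i$. The contragredient Lie superalgebra $\mathfrak g(A)$ is the quotient of $\bar{\mathfrak g}(A)$ by the unique maximal ideal meeting $\mathfrak h$ trivially; we keep writing $X_i,Y_i,h_i$ for the images. The principal $\mathbb Z$-grading is given by $\deg\mathfrak h=0$, $\deg X_i=1$, $\deg Y_i=-1$; $\mathfrak g(A)$ has infinite growth if $\dim\mathfrak g_m$ is not bounded by any polynomial in $|m|$. *)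

theory Defs
  imports Complex_Main
begin

text \<open>A complex Lie superalgebra on the whole type 'a: scalar multiplication sc,
  super bracket br, even part E and odd part Od (complementary subspaces).\<close>

definition super_sign :: "bool \<Rightarrow> bool \<Rightarrow> complex" where
  "super_sign a b = (if a \<and> b then -1 else 1)"

definition homog :: "'a set \<Rightarrow> 'a set \<Rightarrow> bool \<Rightarrow> 'a \<Rightarrow> bool" where
  "homog E Od b x \<longleftrightarrow> (if b then x \<in> Od else x \<in> E)"

definition is_lie_superalgebra ::
  "(complex \<Rightarrow> 'a::ab_group_add \<Rightarrow> 'a) \<Rightarrow> ('a \<Rightarrow> 'a \<Rightarrow> 'a) \<Rightarrow> 'a set \<Rightarrow> 'a set \<Rightarrow> bool" where
  "is_lie_superalgebra sc br E Od \<longleftrightarrow>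
     vector_space sc \<and> module.subspace sc E \<and> module.subspace sc Od \<and>
     E \<inter> Od = {0} \<and> (\<forall>v. \<exists>e\<in>E. \<exists>od\<in>Od. v = e + od) \<and>
     (\<forall>x y z. br (x + y) z = br x z + br y z) \<and>
     (\<forall>x y z. br x (y + z) = br x y + br x z) \<and>
     (\<forall>c x y. br (sc c x) y = sc c (br x y)) \<and>
     (\<forall>c x y. br x (sc c y) = sc c (br x y)) \<and>
     (\<forall>a b x y. homog E Od a x \<longrightarrow> homog E Od b y \<longrightarrow> homog E Od (a \<noteq> b) (br x y)) \<and>
     (\<forall>a b x y. homog E Od a x \<longrightarrow> homog E Od b y \<longrightarrow>
        br x y = - sc (super_sign a b) (br y x)) \<and>
     (\<forall>a b c x y z. homog E Od a x \<longrightarrow> homog E Od b y \<longrightarrow> homog E Od c z \<longrightarrow>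
        br x (br y z) = br (br x y) z + sc (super_sign a b) (br y (br x z)))"

inductive_set generated_subalg ::
  "(complex \<Rightarrow> 'a::ab_group_add \<Rightarrow> 'a) \<Rightarrow> ('a \<Rightarrow> 'a \<Rightarrow> 'a) \<Rightarrow> 'a set \<Rightarrow> 'a set"
  for sc br S where
  gen_base: "x \<in> S \<Longrightarrow> x \<in> generated_subalg sc br S"
| gen_zero: "0 \<in> generated_subalg sc br S"
| gen_add: "x \<in> generated_subalg sc br S \<Longrightarrow> y \<in> generated_subalg sc br S \<Longrightarrow>
            x + y \<in> generated_subalg sc br S"
| gen_scale: "x \<in> generated_subalg sc br S \<Longrightarrow> sc c x \<in> generated_subalg sc br S"
| gen_br: "x \<in> generated_subalg sc br S \<Longrightarrow> y \<in> generated_subalg sc br S \<Longrightarrow>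
            br x y \<in> generated_subalg sc br S"

definition is_ideal :: "(complex \<Rightarrow> 'a::ab_group_add \<Rightarrow> 'a) \<Rightarrow> ('a \<Rightarrow> 'a \<Rightarrow> 'a) \<Rightarrow> 'a set \<Rightarrow> bool" where
  "is_ideal sc br I \<longleftrightarrow> module.subspace sc I \<and> (\<forall>x y. y \<in> I \<longrightarrow> br x y \<in> I)"

definition rank2 :: "(nat \<Rightarrow> nat \<Rightarrow> complex) \<Rightarrow> nat" where
  "rank2 A = (if A 1 1 * A 2 2 - A 1 2 * A 2 1 \<noteq> 0 then 2
              else if A 1 1 = 0 \<and> A 1 2 = 0 \<and> A 2 1 = 0 \<and> A 2 2 = 0 then 0 else 1)"

definition corank2 :: "(nat \<Rightarrow> nat \<Rightarrow> complex) \<Rightarrow> nat" where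
  "corank2 A = 2 - rank2 A"

text \<open>The contragredient Lie superalgebra g(A), characterised (up to isomorphism) as a
  Lie superalgebra (sc, br, E, Od) containing the even abelian Cartan subspace H of dimension
  2 + corank A and elements X i, Y i of parity p i, satisfying the defining relations,
  generated by H and the X i, Y i, and having no nonzero ideal meeting H trivially.\<close>

definition is_contragredient2 ::
  "(complex \<Rightarrow> 'a::ab_group_add \<Rightarrow> 'a) \<Rightarrow> ('a \<Rightarrow> 'a \<Rightarrow> 'a) \<Rightarrow> 'a set \<Rightarrow> 'a set \<Rightarrow>
   (nat \<Rightarrow> nat \<Rightarrow> complex) \<Rightarrow> (nat \<Rightarrow> bool) \<Rightarrow> 'a set \<Rightarrow> (nat \<Rightarrow> 'a \<Rightarrow> complex) \<Rightarrow>
   (nat \<Rightarrow> 'a) \<Rightarrow> (nat \<Rightarrow> 'a) \<Rightarrow> (nat \<Rightarrow> 'a) \<Rightarrow> bool" where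
  "is_contragredient2 sc br E Od A p H \<alpha> hh X Y \<longleftrightarrow>
     is_lie_superalgebra sc br E Od \<and>
     module.subspace sc H \<and> H \<subseteq> E \<and> vector_space.dim sc H = 2 + corank2 A \<and>
     (\<forall>x\<in>H. \<forall>y\<in>H. br x y = 0) \<and>
     (\<forall>i\<in>{1,2}. (\<forall>x\<in>H. \<forall>y\<in>H. \<alpha> i (x + y) = \<alpha> i x + \<alpha> i y) \<and>
                (\<forall>c. \<forall>x\<in>H. \<alpha> i (sc c x) = c * \<alpha> i x)) \<and>
     (\<forall>c1 c2. (\<forall>x\<in>H. c1 * \<alpha> 1 x + c2 * \<alpha> 2 x = 0) \<longrightarrow> c1 = 0 \<and> c2 = 0) \<and>
     (\<forall>i\<in>{1,2}. hh i \<in> H \<and> (\<forall>j\<in>{1,2}. \<alpha> j (hh i) = A i j)) \<and>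
     (\<forall>i\<in>{1,2}. homog E Od (p i) (X i) \<and> homog E Od (p i) (Y i)) \<and>
     (\<forall>i\<in>{1,2}. \<forall>x\<in>H. br x (X i) = sc (\<alpha> i x) (X i) \<and>
                         br x (Y i) = sc (- \<alpha> i x) (Y i)) \<and>
     (\<forall>i\<in>{1,2}. \<forall>j\<in>{1,2}. br (X i) (Y j) = (if i = j then hh i else 0)) \<and>
     generated_subalg sc br (H \<union> X ` {1,2} \<union> Y ` {1,2}) = UNIV \<and>
     (\<forall>I. is_ideal sc br I \<longrightarrow> I \<inter> H = {0} \<longrightarrow> I = {0})"

inductive deg_elem ::
  "('a \<Rightarrow> 'a \<Rightarrow> 'a) \<Rightarrow> 'a set \<Rightarrow> (nat \<Rightarrow> 'a) \<Rightarrow> (nat \<Rightarrow> 'a) \<Rightarrow> int \<Rightarrow> 'a \<Rightarrow> bool"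
  for br H X Y where
  deg_H: "v \<in> H \<Longrightarrow> deg_elem br H X Y 0 v"
| deg_X: "i \<in> {1,2} \<Longrightarrow> deg_elem br H X Y 1 (X i)"
| deg_Y: "i \<in> {1,2} \<Longrightarrow> deg_elem br H X Y (-1) (Y i)"
| deg_br: "deg_elem br H X Y a u \<Longrightarrow> deg_elem br H X Y b w \<Longrightarrow>
            deg_elem br H X Y (a + b) (br u w)"

definition graded_piece ::
  "(complex \<Rightarrow> 'a::ab_group_add \<Rightarrow> 'a) \<Rightarrow> ('a \<Rightarrow> 'a \<Rightarrow> 'a) \<Rightarrow> 'a set \<Rightarrow> (nat \<Rightarrow> 'a) \<Rightarrow> (nat \<Rightarrow> 'a) \<Rightarrow> int \<Rightarrow> 'a set" where
  "graded_piece sc br H X Y m = module.span sc {v. deg_elem br H X Y m v}"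

definition infinite_growth ::
  "(complex \<Rightarrow> 'a::ab_group_add \<Rightarrow> 'a) \<Rightarrow> ('a \<Rightarrow> 'a \<Rightarrow> 'a) \<Rightarrow> 'a set \<Rightarrow> (nat \<Rightarrow> 'a) \<Rightarrow> (nat \<Rightarrow> 'a) \<Rightarrow> bool" where
  "infinite_growth sc br H X Y \<longleftrightarrow>
     \<not> (\<exists>C::real. \<exists>d::nat. \<forall>m::int.
          (\<exists>B. finite B \<and> graded_piece sc br H X Y m \<subseteq> module.span sc B) \<and>
          real (vector_space.dim sc (graded_piece sc br H X Y m)) \<le> C * (1 + real_of_int \<bar>m\<bar>) ^ d)"

end

theory Submission imports Defs begin

declare One_nat_def [simp del]

locale G2 =
  fixes sc :: "complex \<Rightarrow> 'a::ab_group_add \<Rightarrow> 'a"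
    and br :: "'a \<Rightarrow> 'a \<Rightarrow> 'a"
    and E Od H :: "'a set"
    and A :: "nat \<Rightarrow> nat \<Rightarrow> complex"
    and p :: "nat \<Rightarrow> bool"
    and \<alpha> :: "nat \<Rightarrow> 'a \<Rightarrow> complex"
    and hh X Y :: "nat \<Rightarrow> 'a"
  assumes C: "is_contragredient2 sc br E Od A p H \<alpha> hh X Y"
    and A12: "A 1 2 * A 2 1 \<noteq> 0"
    and NN: "\<forall>m::nat. ((\<lambda>v. br (X 1) v) ^^ m) (X 2) \<noteq> 0"
begin

lemma LS: "is_lie_superalgebra sc br E Od" using C unfolding is_contragredient2_def by (elim conjE) assumption

sublocale vs: vector_space sc
  using LS unfolding is_lie_superalgebra_def by (elim conjE) assumption

abbreviation hom where "hom b x \<equiv> homog E Od b x"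
abbreviation ss where "ss \<equiv> super_sign"

lemma LSall: "(\<forall>x y z. br (x + y) z = br x z + br y z) \<and>
     (\<forall>x y z. br x (y + z) = br x y + br x z) \<and>
     (\<forall>c x y. br (sc c x) y = sc c (br x y)) \<and>
     (\<forall>c x y. br x (sc c y) = sc c (br x y)) \<and>
     (\<forall>a b x y. homog E Od a x \<longrightarrow> homog E Od b y \<longrightarrow> homog E Od (a \<noteq> b) (br x y)) \<and>
     (\<forall>a b x y. homog E Od a x \<longrightarrow> homog E Od b y \<longrightarrow>
        br x y = - sc (super_sign a b) (br y x)) \<and>
     (\<forall>a b c x y z. homog E Od a x \<longrightarrow> homog E Od b y \<longrightarrow> homog E Od c z \<longrightarrow>
        br x (br y z) = br (br x y) z + sc (super_sign a b) (br y (br x z)))"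
  using LS unfolding is_lie_superalgebra_def by (elim conjE) (intro conjI; assumption)
lemma Esub: "vs.subspace E" using LS unfolding is_lie_superalgebra_def by (elim conjE) assumption
lemma Osub: "vs.subspace Od" using LS unfolding is_lie_superalgebra_def by (elim conjE) assumption
lemma br_addL: "br (x + y) z = br x z + br y z" using LSall by (elim conjE) (erule allE)+
lemma br_addR: "br x (y + z) = br x y + br x z" using LSall by (elim conjE) (erule allE)+
lemma br_scL: "br (sc c x) y = sc c (br x y)" using LSall by (elim conjE) (erule allE)+
lemma br_scR: "br x (sc c y) = sc c (br x y)" using LSall by (elim conjE) (erule allE)+
lemmas par = LSall[THEN conjunct2, THEN conjunct2, THEN conjunct2, THEN conjunct2, THEN conjunct1, rule_format]
lemmas anti = LSall[THEN conjunct2, THEN conjunct2, THEN conjunct2, THEN conjunct2, THEN conjunct2, THEN conjunct1, rule_format]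
lemmas jac = LSall[THEN conjunct2, THEN conjunct2, THEN conjunct2, THEN conjunct2, THEN conjunct2, THEN conjunct2, rule_format]

lemma br_0L[simp]: "br 0 z = 0"
  using br_addL[of 0 0 z] by simp
lemma br_0R[simp]: "br z 0 = 0"
  using br_addR[of z 0 0] by simp
lemma br_negR: "br x (- y) = - br x y"
proof -
  have "br x y + br x (- y) = 0" using br_addR[of x y "-y"] by simp
  thus ?thesis by (rule add.inverse_unique[symmetric])
qed
lemma br_negL: "br (- x) y = - br x y"
proof -
  have "br x y + br (- x) y = 0" using br_addL[of x "-x" y] by simp
  thus ?thesis by (rule add.inverse_unique[symmetric])
qed
lemma br_diffR: "br x (y - z) = br x y - br x z"
proof -
  have "br x y = br x (y - z) + br x z" using br_addR[of x "y-z" z] by simp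
  thus ?thesis by (simp add: eq_diff_eq)
qed
lemma br_diffL: "br (y - z) x = br y x - br z x"
proof -
  have "br y x = br (y - z) x + br z x" using br_addL[of "y-z" z x] by simp
  thus ?thesis by (simp add: eq_diff_eq)
qed
lemma br_sumR: "br x (sum g S) = sum (\<lambda>i. br x (g i)) S"
proof (induct S rule: infinite_finite_induct)
  case (insert a F) thus ?case by (simp add: br_addR)
qed simp_all
lemma br_sumL: "br (sum g S) x = sum (\<lambda>i. br (g i) x) S"
proof (induct S rule: infinite_finite_induct)
  case (insert a F) thus ?case by (simp add: br_addL)
qed simp_all

lemma ss_cases: "ss a b = 1 \<or> ss a b = -1" by (simp add: super_sign_def)
lemma ss_nz: "ss a b \<noteq> 0" by (simp add: super_sign_def)

lemma hom0: "hom b 0"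
  using Esub Osub by (simp add: homog_def vs.subspace_0)
lemma hom_sc: "hom b x \<Longrightarrow> hom b (sc c x)"
  using Esub Osub by (auto simp add: homog_def vs.subspace_scale)
lemma hom_add: "hom b x \<Longrightarrow> hom b y \<Longrightarrow> hom b (x + y)"
  using Esub Osub by (auto simp add: homog_def vs.subspace_add)
lemma hom_neg: "hom b x \<Longrightarrow> hom b (- x)"
  using Esub Osub by (auto simp add: homog_def vs.subspace_neg)

lemma two_zero: assumes "x + x = (0::'a)" shows "x = 0"
proof -
  have "sc 2 x = x + x" using vs.scale_left_distrib[of 1 1 x] by simp
  hence "sc (1/2) (sc 2 x) = 0" using assms by simp
  thus ?thesis by simp
qed


lemma Cpart: "module.subspace sc H \<and> H \<subseteq> E \<and>
     (\<forall>x\<in>H. \<forall>y\<in>H. br x y = 0) \<and>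
     (\<forall>c1 c2. (\<forall>x\<in>H. c1 * \<alpha> 1 x + c2 * \<alpha> 2 x = 0) \<longrightarrow> c1 = 0 \<and> c2 = 0) \<and>
     (\<forall>i\<in>{1,2}. hh i \<in> H \<and> (\<forall>j\<in>{1,2}. \<alpha> j (hh i) = A i j)) \<and>
     (\<forall>i\<in>{1,2}. homog E Od (p i) (X i) \<and> homog E Od (p i) (Y i)) \<and>
     (\<forall>i\<in>{1,2}. \<forall>x\<in>H. br x (X i) = sc (\<alpha> i x) (X i) \<and>
                         br x (Y i) = sc (- \<alpha> i x) (Y i)) \<and>
     (\<forall>i\<in>{1,2}. \<forall>j\<in>{1,2}. br (X i) (Y j) = (if i = j then hh i else 0)) \<and>
     generated_subalg sc br (H \<union> X ` {1,2} \<union> Y ` {1,2}) = UNIV \<and>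
     (\<forall>I. is_ideal sc br I \<longrightarrow> I \<inter> H = {0} \<longrightarrow> I = {0})"
  using C unfolding is_contragredient2_def by (elim conjE) (intro conjI; assumption)

lemma Hsub: "vs.subspace H" using Cpart by (elim conjE) assumption
lemma HE: "H \<subseteq> E" using Cpart by (elim conjE) assumption
lemma Habel0: "\<forall>x\<in>H. \<forall>y\<in>H. br x y = 0" using Cpart by (elim conjE) assumption
lemma Habel: "x \<in> H \<Longrightarrow> y \<in> H \<Longrightarrow> br x y = 0" using Habel0 by blast
lemma aind0: "\<forall>c1 c2. (\<forall>x\<in>H. c1 * \<alpha> 1 x + c2 * \<alpha> 2 x = 0) \<longrightarrow> c1 = 0 \<and> c2 = 0"
  using Cpart by (elim conjE) assumption
lemma aind: "(\<forall>x\<in>H. c1 * \<alpha> 1 x + c2 * \<alpha> 2 x = 0) \<Longrightarrow> c1 = 0 \<and> c2 = 0"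
  using aind0 by blast
lemma hh0: "\<forall>i\<in>{1,2}. hh i \<in> H \<and> (\<forall>j\<in>{1,2}. \<alpha> j (hh i) = A i j)" using Cpart by (elim conjE) assumption
lemma hhH: "i \<in> {1,2} \<Longrightarrow> hh i \<in> H" using hh0 by blast
lemma ahh: "i \<in> {1,2} \<Longrightarrow> j \<in> {1,2} \<Longrightarrow> \<alpha> j (hh i) = A i j" using hh0 by blast
lemma homXY0: "\<forall>i\<in>{1,2}. homog E Od (p i) (X i) \<and> homog E Od (p i) (Y i)" using Cpart by (elim conjE) assumption
lemma homX: "i \<in> {1,2} \<Longrightarrow> hom (p i) (X i)" using homXY0 by blast
lemma homY: "i \<in> {1,2} \<Longrightarrow> hom (p i) (Y i)" using homXY0 by blast
lemma brH0: "\<forall>i\<in>{1,2}. \<forall>x\<in>H. br x (X i) = sc (\<alpha> i x) (X i) \<and> br x (Y i) = sc (- \<alpha> i x) (Y i)"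
  using Cpart by (elim conjE) assumption
lemma brHX: "i \<in> {1,2} \<Longrightarrow> x \<in> H \<Longrightarrow> br x (X i) = sc (\<alpha> i x) (X i)" using brH0 by blast
lemma brHY: "i \<in> {1,2} \<Longrightarrow> x \<in> H \<Longrightarrow> br x (Y i) = sc (- \<alpha> i x) (Y i)" using brH0 by blast
lemma brXY0: "\<forall>i\<in>{1,2}. \<forall>j\<in>{1,2}. br (X i) (Y j) = (if i = j then hh i else 0)" using Cpart by (elim conjE) assumption
lemma brXY: "i \<in> {1,2} \<Longrightarrow> j \<in> {1,2} \<Longrightarrow> br (X i) (Y j) = (if i = j then hh i else 0)"
  using brXY0 by blast
lemma gen: "generated_subalg sc br (H \<union> X ` {1,2} \<union> Y ` {1,2}) = UNIV" using Cpart by (elim conjE) assumption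
lemma idl0: "\<forall>I. is_ideal sc br I \<longrightarrow> I \<inter> H = {0} \<longrightarrow> I = {0}" using Cpart by (elim conjE) assumption
lemma idl: "is_ideal sc br I \<Longrightarrow> I \<inter> H = {0} \<Longrightarrow> I = {0}" using idl0 by blast

lemma brHX1: "x \<in> H \<Longrightarrow> br x (X 1) = sc (\<alpha> 1 x) (X 1)" by (rule brHX) auto
lemma brHX2: "x \<in> H \<Longrightarrow> br x (X 2) = sc (\<alpha> 2 x) (X 2)" by (rule brHX) auto
lemma homX1: "hom (p 1) (X 1)" by (rule homX) auto
lemma homX2: "hom (p 2) (X 2)" by (rule homX) auto
lemma homY1: "hom (p 1) (Y 1)" by (rule homY) auto
lemma homY2: "hom (p 2) (Y 2)" by (rule homY) auto
lemma homH: "x \<in> H \<Longrightarrow> hom False x" using HE by (auto simp: homog_def)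
lemma ss_F: "ss False b = 1" "ss b False = 1" by (auto simp: super_sign_def)

lemma brYX: "i \<in> {1,2} \<Longrightarrow> j \<in> {1,2} \<Longrightarrow> br (Y i) (X j) = (if i = j then - sc (ss (p i) (p j)) (hh i) else 0)"
proof -
  assume a: "i \<in> {1,2}" "j \<in> {1,2}"
  have "br (Y i) (X j) = - sc (ss (p i) (p j)) (br (X j) (Y i))" by (rule anti[OF homY[OF a(1)] homX[OF a(2)]])
  also have "\<dots> = - sc (ss (p i) (p j)) (if j = i then hh j else 0)" by (simp only: brXY[OF a(2) a(1)])
  finally show ?thesis by (cases "i = j") simp_all
qed

definition u :: "nat \<Rightarrow> 'a" where "u k = ((\<lambda>v. br (X 1) v) ^^ k) (X 2)"
lemma u0: "u 0 = X 2" by (simp add: u_def)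
lemma uS: "u (Suc k) = br (X 1) (u k)" by (simp add: u_def)
lemma u_nz: "u k \<noteq> 0" using NN by (simp add: u_def)

primrec pu :: "nat \<Rightarrow> bool" where
  "pu 0 = p 2" | "pu (Suc k) = (p 1 \<noteq> pu k)"
lemma hom_u: "hom (pu k) (u k)"
proof (induct k)
  case 0 show ?case unfolding u0 pu.simps by (rule homX) simp
next
  case (Suc k) show ?case unfolding uS pu.simps by (rule par[OF homX Suc]) simp
qed

lemma wt_u: "h \<in> H \<Longrightarrow> br h (u k) = sc (of_nat k * \<alpha> 1 h + \<alpha> 2 h) (u k)"
proof (induct k)
  case 0 thus ?case by (simp add: u0 brHX2)
next
  case (Suc k)
  have "br h (u (Suc k)) = br (br h (X 1)) (u k) + sc (ss False (p 1)) (br (X 1) (br h (u k)))"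
    unfolding uS by (rule jac[OF homH[OF Suc.prems] homX hom_u]) simp
  also have "\<dots> = sc (\<alpha> 1 h) (u (Suc k)) + sc (of_nat k * \<alpha> 1 h + \<alpha> 2 h) (u (Suc k))"
    unfolding Suc(1)[OF Suc(2)] brHX1[OF Suc(2)] ss_F br_scL br_scR uS by simp
  also have "\<dots> = sc (of_nat (Suc k) * \<alpha> 1 h + \<alpha> 2 h) (u (Suc k))"
    unfolding vs.scale_left_distrib[symmetric] by (simp add: algebra_simps)
  finally show ?case .
qed


lemma hh1H: "hh 1 \<in> H" and hh2H: "hh 2 \<in> H" by (rule hhH; simp)+
lemma brYX12: "br (Y 1) (X 2) = 0" using brYX[of 1 2] by simp
lemma brYX21: "br (Y 2) (X 1) = 0" using brYX[of 2 1] by simp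
lemma brYX11: "br (Y 1) (X 1) = - sc (ss (p 1) (p 1)) (hh 1)" using brYX[of 1 1] by simp
lemma brYX22: "br (Y 2) (X 2) = - sc (ss (p 2) (p 2)) (hh 2)" using brYX[of 2 2] by simp
lemma A21nz: "A 2 1 \<noteq> 0" and A12nz: "A 1 2 \<noteq> 0" using A12 by auto

lemma F0: "br (Y 1) (u 0) = 0" by (simp add: u0 brYX12)

lemma Fstep: "br (Y 1) (u (Suc k)) = sc (- ss (p 1) (p 1) * (of_nat k * A 1 1 + A 1 2)) (u k)
     + sc (ss (p 1) (p 1)) (br (X 1) (br (Y 1) (u k)))"
proof -
  have "br (Y 1) (u (Suc k)) = br (br (Y 1) (X 1)) (u k) + sc (ss (p 1) (p 1)) (br (X 1) (br (Y 1) (u k)))"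
    unfolding uS by (rule jac[OF homY1 homX1 hom_u])
  moreover have "br (br (Y 1) (X 1)) (u k) = sc (- ss (p 1) (p 1) * (of_nat k * A 1 1 + A 1 2)) (u k)"
    unfolding brYX11 br_negL br_scL wt_u[OF hh1H] using ahh[of 1 1] ahh[of 1 2] by simp
  ultimately show ?thesis by simp
qed

lemma Fc: "\<exists>c. br (Y 1) (u k) = sc c (u (k - 1))"
proof (induct k)
  case 0 show ?case using F0 by (intro exI[of _ 0]) simp
next
  case (Suc k)
  then obtain c where c: "br (Y 1) (u k) = sc c (u (k - 1))" by blast
  show ?case
  proof (cases k)
    case 0
    thus ?thesis unfolding Fstep using F0 by (intro exI[of _ "- ss (p 1) (p 1) * (of_nat k * A 1 1 + A 1 2)"]) simp
  next
    case (Suc k')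
    have "br (X 1) (br (Y 1) (u k)) = sc c (u k)" unfolding c br_scR using Suc by (simp add: uS)
    thus ?thesis unfolding Fstep
      by (intro exI[of _ "- ss (p 1) (p 1) * (of_nat k * A 1 1 + A 1 2) + ss (p 1) (p 1) * c"])
         (simp add: vs.scale_left_distrib algebra_simps)
  qed
qed

lemma Y2_0: "br (Y 2) (u 0) = - sc (ss (p 2) (p 2)) (hh 2)" by (simp add: u0 brYX22)
lemma Y2step: "br (Y 2) (u (Suc k)) = sc (ss (p 2) (p 1)) (br (X 1) (br (Y 2) (u k)))"
proof -
  have "br (Y 2) (u (Suc k)) = br (br (Y 2) (X 1)) (u k) + sc (ss (p 2) (p 1)) (br (X 1) (br (Y 2) (u k)))"
    unfolding uS by (rule jac[OF homY2 homX1 hom_u])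
  thus ?thesis by (simp add: brYX21)
qed
lemma X1hh2: "br (X 1) (hh 2) = - sc (A 2 1) (X 1)"
proof -
  have "br (X 1) (hh 2) = - sc (ss (p 1) False) (br (hh 2) (X 1))" by (rule anti[OF homX1 homH[OF hh2H]])
  thus ?thesis using brHX1[OF hh2H] ahh[of 2 1] by (simp add: ss_F)
qed

definition k1 where "k1 = ss (p 2) (p 1) * ss (p 2) (p 2) * A 2 1"
lemma k1nz: "k1 \<noteq> 0" using A21nz ss_nz by (simp add: k1_def)
lemma Y2_1: "br (Y 2) (u 1) = sc k1 (X 1)"
  using Y2step[of 0] unfolding Y2_0 br_negR br_scR X1hh2 by (simp add: k1_def One_nat_def mult.assoc)
lemma Y2_2: "br (Y 2) (u 2) = sc (ss (p 2) (p 1) * k1) (br (X 1) (X 1))"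
  using Y2step[of 1] unfolding Y2_1 br_scR Suc_1 by simp

lemma X1X1_even: "\<not> p 1 \<Longrightarrow> br (X 1) (X 1) = 0"
proof -
  assume "\<not> p 1"
  hence "br (X 1) (X 1) = - br (X 1) (X 1)" using anti[OF homX1 homX1] by (simp add: super_sign_def)
  hence "br (X 1) (X 1) + br (X 1) (X 1) = 0" by (metis add.right_inverse)
  thus ?thesis by (rule two_zero)
qed

lemma sc2: "sc 2 x = x + x" using vs.scale_left_distrib[of 1 1 x] by simp

lemma three_zero: assumes "x + x + x = (0::'a)" shows "x = 0"
proof -
  have "sc 3 x = x + x + x" using vs.scale_left_distrib[of 2 1 x] vs.scale_left_distrib[of 1 1 x] by simp
  hence "sc (1/3) (sc 3 x) = 0" using assms by simp
  thus ?thesis by simp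
qed

lemma X1X1X1_odd: "p 1 \<Longrightarrow> br (X 1) (br (X 1) (X 1)) = 0"
proof -
  assume o: "p 1"
  let ?w = "br (X 1) (br (X 1) (X 1))"
  have h2: "hom False (br (X 1) (X 1))" using par[OF homX1 homX1] by simp
  have "?w = br (br (X 1) (X 1)) (X 1) + sc (ss (p 1) (p 1)) ?w" by (rule jac[OF homX1 homX1 homX1])
  moreover have "br (br (X 1) (X 1)) (X 1) = - sc (ss False (p 1)) ?w" by (rule anti[OF h2 homX1])
  ultimately have "?w = - ?w - ?w" using o by (simp add: super_sign_def)
  hence "?w + ?w + ?w = 0" by (simp add: algebra_simps)
  thus ?thesis by (rule three_zero)
qed

lemma Zodd: "p 1 \<Longrightarrow> br (br (X 1) (X 1)) (u i) = u (i + 2) + u (i + 2)"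
proof -
  assume o: "p 1"
  have "u (i+2) = br (br (X 1) (X 1)) (u i) + sc (ss (p 1) (p 1)) (u (i+2))"
    using jac[OF homX1 homX1 hom_u, of i] by (simp add: uS numeral_2_eq_2)
  thus ?thesis using o by (simp add: super_sign_def algebra_simps)
qed


definition tt :: nat where "tt = (if p 1 then 3 else 2)"
definition zeta where "zeta = (if p 1 then br (X 1) (X 1) else X 1)"

lemma tt_ge: "tt \<ge> 2" by (simp add: tt_def)

lemma Y0: "k \<ge> tt \<Longrightarrow> br (Y 2) (u k) = 0"
proof (induct k)
  case 0 thus ?case by (simp add: tt_def split: if_splits)
next
  case (Suc k)
  show ?case
  proof (cases "k \<ge> tt")
    case True
    thus ?thesis using Suc by (simp add: Y2step)
  next
    case False
    hence k: "Suc k = tt" using Suc by simp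
    show ?thesis
    proof (cases "p 1")
      case True
      hence "k = 2" using k by (simp add: tt_def)
      have "br (Y 2) (u (Suc 2)) = 0" unfolding Y2step Y2_2 br_scR X1X1X1_odd[OF True] by simp
      thus ?thesis using \<open>k = 2\<close> by simp
    next
      case False
      hence "k = 1" using k by (simp add: tt_def)
      have "br (Y 2) (u 2) = 0" using False by (simp add: Y2_2 X1X1_even)
      thus ?thesis using \<open>k = 1\<close> by (simp add: Suc_1)
    qed
  qed
qed

lemma Yt: "\<exists>\<kappa>. \<kappa> \<noteq> 0 \<and> br (Y 2) (u (tt - 1)) = sc \<kappa> zeta"
proof (cases "p 1")
  case True
  hence "tt - 1 = 2" by (simp add: tt_def)
  thus ?thesis using True Y2_2 k1nz ss_nz by (intro exI[of _ "ss (p 2) (p 1) * k1"]) (simp add: zeta_def)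
next
  case False
  hence "tt - 1 = 1" by (simp add: tt_def)
  thus ?thesis using False Y2_1 k1nz by (intro exI[of _ "k1"]) (simp add: zeta_def)
qed

lemma hom_zeta: "\<exists>b. hom b zeta"
  using par[OF homX1 homX1] homX1 by (auto simp: zeta_def)

lemma X1nz: "X 1 \<noteq> 0" using u_nz[of 1] uS[of 0] by (auto simp: One_nat_def)

lemma zeta_nz: "zeta \<noteq> 0"
proof (cases "p 1")
  case True
  show ?thesis
  proof
    assume "zeta = 0"
    hence "br (br (X 1) (X 1)) (u 0) = 0" using True by (simp add: zeta_def)
    hence "u 2 + u 2 = 0" using Zodd[OF True, of 0] by (simp add: numeral_2_eq_2)
    thus False using two_zero u_nz by blast
  qed
next
  case False thus ?thesis using X1nz by (simp add: zeta_def)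
qed

lemma Zb: "\<exists>\<kappa>. \<kappa> \<noteq> 0 \<and> br (u i) zeta = sc \<kappa> (u (i + tt - 1))"
proof (cases "p 1")
  case True
  have "br (u i) zeta = - sc (ss (pu i) False) (br (br (X 1) (X 1)) (u i))"
    unfolding zeta_def using True anti[OF hom_u par[OF homX1 homX1]] by simp
  also have "\<dots> = sc (-2) (u (i + 2))" using Zodd[OF True, of i]
    by (simp add: ss_F sc2)
  finally show ?thesis using True by (intro exI[of _ "-2"]) (simp add: tt_def)
next
  case False
  have "br (u i) zeta = - sc (ss (pu i) (p 1)) (br (X 1) (u i))"
    unfolding zeta_def using False anti[OF hom_u homX1] by simp
  also have "\<dots> = sc (- ss (pu i) (p 1)) (u (i + 1))" by (simp add: uS[of i, unfolded Suc_eq_plus1])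
  finally show ?thesis using False ss_nz by (intro exI[of _ "- ss (pu i) (p 1)"]) (simp add: tt_def Suc_eq_plus1)
qed


section \<open>Weight vectors and the ideal argument\<close>

definition wtv :: "'a \<Rightarrow> bool" where
  "wtv w \<longleftrightarrow> (\<exists>c1 c2::nat. c2 \<ge> 1 \<and> (\<forall>h\<in>H. br h w = sc (of_nat c1 * \<alpha> 1 h + of_nat c2 * \<alpha> 2 h) w))"

lemma wtv_sc: "wtv w \<Longrightarrow> wtv (sc c w)"
proof -
  assume "wtv w"
  then obtain c1 c2 :: nat where d: "c2 \<ge> 1" "\<forall>h\<in>H. br h w = sc (of_nat c1 * \<alpha> 1 h + of_nat c2 * \<alpha> 2 h) w"
    unfolding wtv_def by auto
  show ?thesis unfolding wtv_def
    by (intro exI[of _ c1] exI[of _ c2] conjI d(1) ballI) (simp add: br_scR d(2) vs.scale_left_commute)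
qed

lemma wtv_sum: "finite T \<Longrightarrow> (\<And>w. w \<in> T \<Longrightarrow> wtv (g w)) \<Longrightarrow> (\<And>h. h \<in> H \<Longrightarrow> br h y = 0) \<Longrightarrow> y = sum g T \<Longrightarrow> y = 0"
proof (induct T arbitrary: g y rule: finite_induct)
  case empty thus ?case by simp
next
  case (insert a T)
  obtain c1 c2 :: nat where c: "c2 \<ge> 1" "\<forall>h\<in>H. br h (g a) = sc (of_nat c1 * \<alpha> 1 h + of_nat c2 * \<alpha> 2 h) (g a)"
    using insert(4)[of a] unfolding wtv_def by auto
  obtain h0 where h0: "h0 \<in> H" "of_nat c1 * \<alpha> 1 h0 + of_nat c2 * \<alpha> 2 h0 \<noteq> 0"
    using aind[of "of_nat c1" "of_nat c2"] c(1) by fastforce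
  define \<beta> where "\<beta> = of_nat c1 * \<alpha> 1 h0 + of_nat c2 * \<alpha> 2 h0"
  define g' where "g' w = br h0 (g w) - sc \<beta> (g w)" for w
  have sumg: "sum g T = y - g a" using insert(1,2,6) by simp
  have c2': "br h0 (g a) = sc \<beta> (g a)" using c(2) h0(1) \<beta>_def by simp
  have "sum g' T = br h0 (sum g T) - sc \<beta> (sum g T)"
    unfolding g'_def by (simp add: sum_subtractf br_sumR vs.scale_sum_right)
  also have "\<dots> = sc (- \<beta>) y"
    unfolding sumg br_diffR vs.scale_right_diff_distrib insert(5)[OF h0(1)] c2'
    by simp
  finally have e: "sc (- \<beta>) y = sum g' T" ..
  have w: "wtv (g' w)" if "w \<in> T" for w
  proof -
    have gw: "wtv (g w)" using insert(4) that by simp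
    then obtain d1 d2 :: nat where d: "d2 \<ge> 1" "\<forall>h\<in>H. br h (g w) = sc (of_nat d1 * \<alpha> 1 h + of_nat d2 * \<alpha> 2 h) (g w)"
      unfolding wtv_def by blast
    have "g' w = sc (of_nat d1 * \<alpha> 1 h0 + of_nat d2 * \<alpha> 2 h0 - \<beta>) (g w)"
      unfolding g'_def d(2)[rule_format, OF h0(1)] by (simp add: vs.scale_left_diff_distrib)
    thus ?thesis using wtv_sc[OF gw] by simp
  qed
  have "sc (- \<beta>) y = 0"
    by (rule insert(3)[OF w _ e]) (simp_all add: br_scR br_negR insert(5))
  thus ?case using h0(2) unfolding \<beta>_def by (simp add: add_eq_0_iff)
qed

inductive_set PP :: "nat \<Rightarrow> 'a set" for k where
  PP_base: "u k \<in> PP k"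
| PP_step: "w \<in> PP k \<Longrightarrow> j \<in> {1,2} \<Longrightarrow> br (X j) w \<in> PP k"

lemma PP_hom: "w \<in> PP k \<Longrightarrow> \<exists>b. hom b w"
  by (induct rule: PP.induct) (auto intro: hom_u par homX)

lemma PP_wtv: "w \<in> PP k \<Longrightarrow> wtv w"
proof (induct rule: PP.induct)
  case PP_base
  show ?case unfolding wtv_def using wt_u by (intro exI[of _ k] exI[of _ 1]) simp
next
  case (PP_step w j)
  obtain c1 c2 :: nat where c: "c2 \<ge> 1" "\<forall>h\<in>H. br h w = sc (of_nat c1 * \<alpha> 1 h + of_nat c2 * \<alpha> 2 h) w"
    using PP_step(2) unfolding wtv_def by auto
  obtain b where b: "hom b w" using PP_hom[OF PP_step(1)] by blast
  have j: "\<forall>h\<in>H. br h (br (X j) w) = sc (\<alpha> j h + (of_nat c1 * \<alpha> 1 h + of_nat c2 * \<alpha> 2 h)) (br (X j) w)"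
  proof
    fix h assume h: "h \<in> H"
    have "br h (br (X j) w) = br (br h (X j)) w + sc (ss False (p j)) (br (X j) (br h w))"
      by (rule jac[OF homH[OF h] homX[OF PP_step(3)] b])
    also have "\<dots> = sc (\<alpha> j h + (of_nat c1 * \<alpha> 1 h + of_nat c2 * \<alpha> 2 h)) (br (X j) w)"
      unfolding brHX[OF PP_step(3) h] ss_F c(2)[rule_format, OF h] br_scL br_scR
      by (simp add: vs.scale_left_distrib)
    finally show "br h (br (X j) w) = sc (\<alpha> j h + (of_nat c1 * \<alpha> 1 h + of_nat c2 * \<alpha> 2 h)) (br (X j) w)" .
  qed
  show ?case
  proof (cases "j = 1")
    case True
    thus ?thesis unfolding wtv_def using j c(1)
      by (intro exI[of _ "Suc c1"] exI[of _ c2]) (simp add: algebra_simps)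
  next
    case False
    hence "j = 2" using PP_step(3) by simp
    thus ?thesis unfolding wtv_def using j c(1)
      by (intro exI[of _ c1] exI[of _ "Suc c2"]) (simp add: algebra_simps)
  qed
qed

lemma span_lin: "(\<And>w. w \<in> P \<Longrightarrow> br z w \<in> vs.span Q) \<Longrightarrow> w \<in> vs.span P \<Longrightarrow> br z w \<in> vs.span Q"
proof -
  assume a: "\<And>w. w \<in> P \<Longrightarrow> br z w \<in> vs.span Q" and w: "w \<in> vs.span P"
  from w show ?thesis
  proof (induct rule: vs.span_induct_alt)
    case base thus ?case by (simp add: vs.span_zero)
  next
    case (step c x y)
    have "br z x \<in> vs.span Q" using a step(1) by simp
    thus ?case using step(2) unfolding br_addR br_scR by (intro vs.span_add vs.span_scale)
  qed
qed

lemma span_linL: "(\<And>z. z \<in> P \<Longrightarrow> br z w \<in> vs.span Q) \<Longrightarrow> z \<in> vs.span P \<Longrightarrow> br z w \<in> vs.span Q"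
proof -
  assume a: "\<And>z. z \<in> P \<Longrightarrow> br z w \<in> vs.span Q" and w: "z \<in> vs.span P"
  from w show ?thesis
  proof (induct rule: vs.span_induct_alt)
    case base thus ?case by (simp add: vs.span_zero)
  next
    case (step c x y)
    have "br x w \<in> vs.span Q" using a step(1) by simp
    thus ?case using step(2) unfolding br_addL br_scL by (intro vs.span_add vs.span_scale)
  qed
qed


inductive_set Mon :: "'a set" where
  Mon_H: "x \<in> H \<Longrightarrow> x \<in> Mon"
| Mon_X: "i \<in> {1,2} \<Longrightarrow> X i \<in> Mon"
| Mon_Y: "i \<in> {1,2} \<Longrightarrow> Y i \<in> Mon"
| Mon_br: "a \<in> Mon \<Longrightarrow> b \<in> Mon \<Longrightarrow> br a b \<in> Mon"

lemma Mon_hom: "z \<in> Mon \<Longrightarrow> \<exists>b. hom b z"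
  by (induct rule: Mon.induct) (auto intro: homH homX homY par)

lemma gen_Mon: "x \<in> generated_subalg sc br (H \<union> X ` {1,2} \<union> Y ` {1,2}) \<Longrightarrow> x \<in> vs.span Mon"
proof (induct rule: generated_subalg.induct)
  case (gen_base x) thus ?case by (auto intro: vs.span_base Mon.intros)
next
  case gen_zero thus ?case by (rule vs.span_zero)
next
  case (gen_add x y) show ?case using gen_add(2,4) by (rule vs.span_add)
next
  case (gen_scale x c) show ?case using gen_scale(2) by (rule vs.span_scale)
next
  case (gen_br x y)
  show ?case
  proof (rule span_linL[OF _ gen_br(2)])
    fix z assume z: "z \<in> Mon"
    show "br z y \<in> vs.span Mon"
      by (rule span_lin[OF _ gen_br(4)]) (rule vs.span_base, rule Mon_br[OF z])
  qed
qed

lemma all_Mon: "x \<in> vs.span Mon"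
  using gen_Mon gen by auto

context
  fixes k
  assumes K1: "br (Y 1) (u k) = 0" and K2: "br (Y 2) (u k) = 0"
begin

lemma PP_H: "h \<in> H \<Longrightarrow> w \<in> PP k \<Longrightarrow> br h w \<in> vs.span (PP k)"
proof -
  assume h: "h \<in> H" and w: "w \<in> PP k"
  obtain c1 c2 :: nat where "\<forall>h\<in>H. br h w = sc (of_nat c1 * \<alpha> 1 h + of_nat c2 * \<alpha> 2 h) w"
    using PP_wtv[OF w] unfolding wtv_def by blast
  thus ?thesis using h w by (simp add: vs.span_scale vs.span_base)
qed

lemma PP_Y: "i \<in> {1,2} \<Longrightarrow> w \<in> PP k \<Longrightarrow> br (Y i) w \<in> vs.span (PP k)"
proof -
  assume i: "i \<in> {1,2}" and w: "w \<in> PP k"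
  from w show ?thesis
  proof (induct rule: PP.induct)
    case PP_base
    show ?case using i K1 K2 by (auto simp: vs.span_zero)
  next
    case (PP_step w j)
    obtain b where b: "hom b w" using PP_hom[OF PP_step(1)] by blast
    have e: "br (Y i) (br (X j) w) = br (br (Y i) (X j)) w + sc (ss (p i) (p j)) (br (X j) (br (Y i) w))"
      by (rule jac[OF homY[OF i] homX[OF PP_step(3)] b])
    have "br (Y i) (X j) \<in> H"
      using brYX[OF i PP_step(3)] hhH[OF i]
      by (cases "i = j") (simp_all add: vs.subspace_neg[OF Hsub] vs.subspace_scale[OF Hsub] vs.subspace_0[OF Hsub])
    hence 1: "br (br (Y i) (X j)) w \<in> vs.span (PP k)" by (rule PP_H[OF _ PP_step(1)])
    have 2: "br (X j) (br (Y i) w) \<in> vs.span (PP k)"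
      by (rule span_lin[OF _ PP_step(2)]) (rule vs.span_base, rule PP.PP_step[OF _ PP_step(3)])
    show ?case unfolding e by (intro vs.span_add vs.span_scale 1 2)
  qed
qed

lemma PP_Mon: "z \<in> Mon \<Longrightarrow> w \<in> PP k \<Longrightarrow> br z w \<in> vs.span (PP k)"
proof (induct arbitrary: w rule: Mon.induct)
  case (Mon_H x) thus ?case by (rule PP_H)
next
  case (Mon_X i) thus ?case by (intro vs.span_base PP.PP_step)
next
  case (Mon_Y i) thus ?case by (rule PP_Y)
next
  case (Mon_br a b w)
  obtain ba where ba: "hom ba a" using Mon_hom[OF Mon_br(1)] by blast
  obtain bb where bb: "hom bb b" using Mon_hom[OF Mon_br(3)] by blast
  obtain bw where bw: "hom bw w" using PP_hom[OF Mon_br(5)] by blast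
  have e: "br (br a b) w = br a (br b w) - sc (ss ba bb) (br b (br a w))"
    using jac[OF ba bb bw] by (simp add: algebra_simps)
  have 1: "br a (br b w) \<in> vs.span (PP k)"
    by (rule span_lin[OF Mon_br(2) Mon_br(4)[OF Mon_br(5)]])
  have 2: "br b (br a w) \<in> vs.span (PP k)"
    by (rule span_lin[OF Mon_br(4) Mon_br(2)[OF Mon_br(5)]])
  show ?case unfolding e by (intro vs.span_diff vs.span_scale 1 2)
qed

lemma kill_zero: "u k = 0"
proof -
  let ?I = "vs.span (PP k)"
  have cl: "br x y \<in> ?I" if y: "y \<in> ?I" for x y
    by (rule span_linL[OF _ all_Mon]) (rule span_lin[OF PP_Mon y])
  have idI: "is_ideal sc br ?I"
    unfolding is_ideal_def using cl vs.subspace_span by blast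
  have "?I \<inter> H \<subseteq> {0}"
  proof
    fix x assume x: "x \<in> ?I \<inter> H"
    then obtain T r where T: "finite T" "T \<subseteq> PP k" "x = (\<Sum>a\<in>T. sc (r a) a)"
      unfolding vs.span_explicit by blast
    have "x = 0"
    proof (rule wtv_sum[OF T(1) _ _ T(3)])
      fix w assume "w \<in> T" thus "wtv (sc (r w) w)" using T(2) by (intro wtv_sc PP_wtv) auto
    next
      fix h assume "h \<in> H" thus "br h x = 0" using x Habel by blast
    qed
    thus "x \<in> {0}" by simp
  qed
  hence "?I \<inter> H = {0}" using vs.span_zero vs.subspace_0[OF Hsub] by blast
  hence "?I = {0}" by (rule idl[OF idI])
  moreover have "u k \<in> ?I" by (intro vs.span_base PP.PP_base)
  ultimately show ?thesis by simp
qed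

end

lemma Fnz: "k \<ge> tt \<Longrightarrow> br (Y 1) (u k) \<noteq> 0"
  using kill_zero[of k] Y0[of k] u_nz by blast


section \<open>Iterated brackets of the u's\<close>

primrec G :: "'a \<Rightarrow> nat list \<Rightarrow> 'a" where
  "G z [] = z"
| "G z (i # r) = G (br (u i) z) r"

definition R :: "nat list \<Rightarrow> 'a" where
  "R \<rho> = (case \<rho> of [] \<Rightarrow> 0 | a # r \<Rightarrow> G (u a) r)"

lemma R_Cons: "R (a # r) = G (u a) r" by (simp add: R_def)

lemma G_add: "G (z1 + z2) r = G z1 r + G z2 r"
  by (induct r arbitrary: z1 z2) (simp_all add: br_addR)
lemma G_sc: "G (sc c z) r = sc c (G z r)"
  by (induct r arbitrary: z) (simp_all add: br_scR)
lemma G_0: "G 0 r = 0"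
  using G_sc[of 0 0 r] by simp

lemma G_hom: "hom b z \<Longrightarrow> \<exists>b'. hom b' (G z r)"
proof (induct r arbitrary: z b)
  case Nil thus ?case by auto
next
  case (Cons i r) show ?case using Cons(1)[OF par[OF hom_u Cons(2)]] by simp
qed

definition Lower1 :: "nat list \<Rightarrow> nat list set" where
  "Lower1 r = {r[q := r ! q - 1] | q. q < length r}"

lemma Lower1_Cons: "r' \<in> Lower1 r \<Longrightarrow> i # r' \<in> Lower1 (i # r)"
proof -
  assume "r' \<in> Lower1 r"
  then obtain q where q: "q < length r" "r' = r[q := r ! q - 1]" unfolding Lower1_def by blast
  hence "i # r' = (i # r)[Suc q := (i # r) ! Suc q - 1]" "Suc q < length (i # r)" by simp_all
  thus ?thesis unfolding Lower1_def by blast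
qed
lemma Lower1_hd: "(i - 1) # r \<in> Lower1 (i # r)"
  unfolding Lower1_def by (auto intro!: exI[of _ 0])

lemma sign_cases: "(s::complex) = 1 \<or> s = -1 \<Longrightarrow> s' = 1 \<or> s' = -1 \<Longrightarrow> s * s' = 1 \<or> s * s' = -1"
  by auto

lemma F_G: "hom b z \<Longrightarrow> \<exists>s. (s = 1 \<or> s = -1) \<and>
   br (Y 1) (G z r) - sc s (G (br (Y 1) z) r) \<in> vs.span {G z r' | r'. r' \<in> Lower1 r}"
proof (induct r arbitrary: z b)
  case Nil thus ?case by (intro exI[of _ 1]) (simp add: vs.span_zero)
next
  case (Cons i r)
  define z' where "z' = br (u i) z"
  have hz': "hom (pu i \<noteq> b) z'" unfolding z'_def by (rule par[OF hom_u Cons(2)])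
  obtain s where s: "s = 1 \<or> s = -1"
    "br (Y 1) (G z' r) - sc s (G (br (Y 1) z') r) \<in> vs.span {G z' r' | r'. r' \<in> Lower1 r}"
    using Cons(1)[OF hz'] by blast
  obtain c where c: "br (Y 1) (u i) = sc c (u (i - 1))" using Fc by blast
  have Fz': "br (Y 1) z' = sc c (br (u (i - 1)) z) + sc (ss (p 1) (pu i)) (br (u i) (br (Y 1) z))"
    unfolding z'_def using jac[OF homY1 hom_u Cons(2), of i] by (simp add: c br_scL)
  have GF: "G (br (Y 1) z') r = sc c (G z ((i - 1) # r)) + sc (ss (p 1) (pu i)) (G (br (Y 1) z) (i # r))"
    unfolding Fz' G_add G_sc by simp
  let ?T = "{G z r' | r'. r' \<in> Lower1 (i # r)}"
  have sub: "{G z' r' | r'. r' \<in> Lower1 r} \<subseteq> ?T"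
    unfolding z'_def by (force intro: Lower1_Cons)
  have 1: "br (Y 1) (G z' r) - sc s (G (br (Y 1) z') r) \<in> vs.span ?T"
    using vs.span_mono[OF sub] s(2) by blast
  have 2: "G z ((i - 1) # r) \<in> vs.span ?T" by (rule vs.span_base) (blast intro: Lower1_hd)
  have eq: "br (Y 1) (G z (i # r)) - sc (s * ss (p 1) (pu i)) (G (br (Y 1) z) (i # r))
     = (br (Y 1) (G z' r) - sc s (G (br (Y 1) z') r)) + sc (s * c) (G z ((i - 1) # r))"
    unfolding GF by (simp add: z'_def vs.scale_right_distrib algebra_simps)
  show ?case
    by (intro exI[of _ "s * ss (p 1) (pu i)"] conjI sign_cases s(1) ss_cases)
       (unfold eq, intro vs.span_add vs.span_scale 1 2)
qed

lemma FR: "\<exists>\<kappa>. (b \<ge> tt \<longrightarrow> \<kappa> \<noteq> 0) \<and>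
   br (Y 1) (R (b # r)) - sc \<kappa> (R ((b - 1) # r)) \<in> vs.span {R (b # r') | r'. r' \<in> Lower1 r}"
proof -
  obtain s where s: "s = 1 \<or> s = -1"
    "br (Y 1) (G (u b) r) - sc s (G (br (Y 1) (u b)) r) \<in> vs.span {G (u b) r' | r'. r' \<in> Lower1 r}"
    using F_G[OF hom_u] by blast
  obtain c where c: "br (Y 1) (u b) = sc c (u (b - 1))" using Fc by blast
  have "b \<ge> tt \<longrightarrow> c \<noteq> 0" using Fnz[of b] c by auto
  thus ?thesis using s unfolding R_Cons c G_sc by (intro exI[of _ "s * c"]) auto
qed


definition Rset :: "nat \<Rightarrow> nat \<Rightarrow> nat list \<Rightarrow> 'a set" where
  "Rset n a r = {R (a' # r') | a' r'. a < a' + n \<and> length r' = length r \<and> (\<forall>q<length r. r ! q \<le> r' ! q + n)}"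

lemma Lower1_prop: "r'' \<in> Lower1 r' \<Longrightarrow> length r'' = length r' \<and> (\<forall>q<length r'. r' ! q \<le> r'' ! q + 1)"
  unfolding Lower1_def by (auto simp: nth_list_update)

lemma F_Rset1: "w \<in> Rset n a r \<Longrightarrow> br (Y 1) w \<in> vs.span (Rset (Suc n) a r)"
proof -
  assume "w \<in> Rset n a r"
  then obtain a' r' where w: "w = R (a' # r')" "a < a' + n" "length r' = length r" "\<forall>q<length r. r ! q \<le> r' ! q + n"
    unfolding Rset_def by blast
  obtain \<kappa> where k: "br (Y 1) (R (a' # r')) - sc \<kappa> (R ((a' - 1) # r')) \<in> vs.span {R (a' # r'') | r''. r'' \<in> Lower1 r'}"
    using FR by blast
  have sub: "{R (a' # r'') | r''. r'' \<in> Lower1 r'} \<subseteq> Rset (Suc n) a r"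
  proof
    fix x assume "x \<in> {R (a' # r'') | r''. r'' \<in> Lower1 r'}"
    then obtain r'' where x: "x = R (a' # r'')" "r'' \<in> Lower1 r'" by blast
    have Lp: "length r'' = length r' \<and> (\<forall>q<length r'. r' ! q \<le> r'' ! q + 1)" by (rule Lower1_prop[OF x(2)])
    have L: "length r'' = length r" using Lp w(3) by simp
    have Q: "\<forall>q<length r. r ! q \<le> r'' ! q + Suc n"
    proof (intro allI impI)
      fix q assume q: "q < length r"
      hence "r ! q \<le> r' ! q + n" "r' ! q \<le> r'' ! q + 1" using w(3,4) Lp by auto
      thus "r ! q \<le> r'' ! q + Suc n" by simp
    qed
    have "a < a' + Suc n" using w(2) by simp
    thus "x \<in> Rset (Suc n) a r" unfolding Rset_def using x(1) L Q by blast
  qed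
  have m: "R ((a' - 1) # r') \<in> Rset (Suc n) a r"
  proof -
    have "a < (a' - 1) + Suc n" using w(2) by simp
    moreover have "\<forall>q<length r. r ! q \<le> r' ! q + Suc n"
    proof (intro allI impI)
      fix q assume "q < length r" thus "r ! q \<le> r' ! q + Suc n" using w(4) by auto
    qed
    ultimately show ?thesis unfolding Rset_def using w(3) by blast
  qed
  have "br (Y 1) w = (br (Y 1) (R (a' # r')) - sc \<kappa> (R ((a' - 1) # r'))) + sc \<kappa> (R ((a' - 1) # r'))"
    unfolding w(1) by (rule diff_add_cancel[symmetric])
  moreover have "br (Y 1) (R (a' # r')) - sc \<kappa> (R ((a' - 1) # r')) \<in> vs.span (Rset (Suc n) a r)"
    using vs.span_mono[OF sub] k by blast
  moreover have "sc \<kappa> (R ((a' - 1) # r')) \<in> vs.span (Rset (Suc n) a r)"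
    by (intro vs.span_scale vs.span_base m)
  ultimately show "br (Y 1) w \<in> vs.span (Rset (Suc n) a r)" by (simp only: vs.span_add)
qed

lemma F_Rset: "x \<in> vs.span (Rset n a r) \<Longrightarrow> br (Y 1) x \<in> vs.span (Rset (Suc n) a r)"
  by (rule span_lin[OF F_Rset1])

lemma MS: "n + tt \<le> a + 1 \<Longrightarrow> \<exists>\<kappa>. \<kappa> \<noteq> 0 \<and>
   (br (Y 1) ^^ n) (R (a # r)) - sc \<kappa> (R ((a - n) # r)) \<in> vs.span (Rset n a r)"
proof (induct n)
  case 0 thus ?case by (intro exI[of _ 1]) (simp add: vs.span_zero)
next
  case (Suc n)
  then obtain \<kappa> where k: "\<kappa> \<noteq> 0" "(br (Y 1) ^^ n) (R (a # r)) - sc \<kappa> (R ((a - n) # r)) \<in> vs.span (Rset n a r)"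
    by auto
  obtain \<kappa>' where k': "a - n \<ge> tt \<longrightarrow> \<kappa>' \<noteq> 0"
    "br (Y 1) (R ((a - n) # r)) - sc \<kappa>' (R ((a - n - 1) # r)) \<in> vs.span {R ((a - n) # r') | r'. r' \<in> Lower1 r}"
    using FR by blast
  have knz: "\<kappa>' \<noteq> 0" using k' Suc(2) by auto
  have sub: "{R ((a - n) # r') | r'. r' \<in> Lower1 r} \<subseteq> Rset (Suc n) a r"
  proof
    fix x assume "x \<in> {R ((a - n) # r') | r'. r' \<in> Lower1 r}"
    then obtain r'' where x: "x = R ((a - n) # r'')" "r'' \<in> Lower1 r" by blast
    have Lp: "length r'' = length r \<and> (\<forall>q<length r. r ! q \<le> r'' ! q + 1)" by (rule Lower1_prop[OF x(2)])
    have Q: "\<forall>q<length r. r ! q \<le> r'' ! q + Suc n" using Lp by fastforce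
    have "a < (a - n) + Suc n" using Suc(2) by simp
    thus "x \<in> Rset (Suc n) a r" unfolding Rset_def using x(1) Lp Q by blast
  qed
  define d where "d = (br (Y 1) ^^ n) (R (a # r)) - sc \<kappa> (R ((a - n) # r))"
  define d' where "d' = br (Y 1) (R ((a - n) # r)) - sc \<kappa>' (R ((a - n - 1) # r))"
  have e: "(br (Y 1) ^^ Suc n) (R (a # r)) - sc (\<kappa> * \<kappa>') (R ((a - Suc n) # r)) = br (Y 1) d + sc \<kappa> d'"
  proof -
    have aa: "a - n - 1 = a - Suc n" by simp
    show ?thesis unfolding d_def d'_def funpow.simps comp_apply aa
      by (simp add: br_diffR br_scR vs.scale_right_diff_distrib algebra_simps)
  qed
  have 1: "br (Y 1) d \<in> vs.span (Rset (Suc n) a r)" using F_Rset k(2) d_def by simp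
  have 2: "d' \<in> vs.span (Rset (Suc n) a r)" using vs.span_mono[OF sub] k'(2) d'_def by blast
  show ?case using k(1) knz e 1 2 by (intro exI[of _ "\<kappa> * \<kappa>'"]) (simp add: vs.span_add vs.span_scale)
qed


lemma Y2G: "(\<forall>i\<in>set r. tt \<le> i) \<Longrightarrow> hom b z \<Longrightarrow> \<exists>s. (s = 1 \<or> s = -1) \<and> br (Y 2) (G z r) = sc s (G (br (Y 2) z) r)"
proof (induct r arbitrary: z b)
  case Nil thus ?case by (intro exI[of _ 1]) simp
next
  case (Cons i r)
  define z' where "z' = br (u i) z"
  have hz': "hom (pu i \<noteq> b) z'" unfolding z'_def by (rule par[OF hom_u Cons(3)])
  obtain s where s: "s = 1 \<or> s = -1" "br (Y 2) (G z' r) = sc s (G (br (Y 2) z') r)"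
    using Cons(1)[OF _ hz'] Cons(2) by auto
  have "br (Y 2) z' = br (br (Y 2) (u i)) z + sc (ss (p 2) (pu i)) (br (u i) (br (Y 2) z))"
    unfolding z'_def by (rule jac[OF homY2 hom_u Cons(3)])
  also have "\<dots> = sc (ss (p 2) (pu i)) (br (u i) (br (Y 2) z))" using Y0[of i] Cons(2) by simp
  finally have e: "br (Y 2) z' = sc (ss (p 2) (pu i)) (br (u i) (br (Y 2) z))" .
  have "br (Y 2) (G z (i # r)) = sc (s * ss (p 2) (pu i)) (G (br (Y 2) z) (i # r))"
    unfolding G.simps z'_def[symmetric] s(2) e G_sc by simp
  thus ?case
    by (intro exI[of _ "s * ss (p 2) (pu i)"] conjI sign_cases s(1) ss_cases)
qed

lemma y2_R_zero: "\<forall>i\<in>set \<rho>. tt \<le> i \<Longrightarrow> br (Y 2) (R \<rho>) = 0"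
proof (cases \<rho>)
  case Nil thus ?thesis by (simp add: R_def)
next
  case (Cons a r)
  assume A: "\<forall>i\<in>set \<rho>. tt \<le> i"
  have rr: "\<forall>i\<in>set r. tt \<le> i" using A Cons by simp
  obtain s where "br (Y 2) (G (u a) r) = sc s (G (br (Y 2) (u a)) r)"
    using Y2G[OF rr hom_u] by blast
  thus ?thesis using Y0[of a] A Cons by (simp add: R_Cons G_0)
qed

lemma y2_Rset: "n + tt \<le> a + 1 \<Longrightarrow> (\<forall>q<length r. tt + n \<le> r ! q) \<Longrightarrow> x \<in> vs.span (Rset n a r) \<Longrightarrow> br (Y 2) x = 0"
proof -
  assume a1: "n + tt \<le> a + 1" and a2: "\<forall>q<length r. tt + n \<le> r ! q" and x: "x \<in> vs.span (Rset n a r)"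
  have base: "br (Y 2) w = 0" if w: "w \<in> Rset n a r" for w
  proof -
    obtain a' r' where w': "w = R (a' # r')" "a < a' + n" "length r' = length r" "\<forall>q<length r. r ! q \<le> r' ! q + n"
      using w unfolding Rset_def by blast
    have "\<forall>i\<in>set (a' # r'). tt \<le> i"
    proof
      fix i assume "i \<in> set (a' # r')"
      then consider "i = a'" | q where "q < length r'" "i = r' ! q" by (auto simp: in_set_conv_nth)
      thus "tt \<le> i"
      proof cases
        case 1 thus ?thesis using a1 w'(2) by simp
      next
        case 2 thus ?thesis using a2 w'(3,4) by fastforce
      qed
    qed
    thus ?thesis using w'(1) y2_R_zero by simp
  qed
  from x show ?thesis
  proof (induct rule: vs.span_induct_alt)
    case base thus ?case by simp
  next
    case (step c x y) thus ?case using base by (simp add: br_addR br_scR)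
  qed
qed

abbreviation Fp where "Fp n \<equiv> (br (Y 1) ^^ n)"

lemma Fp_add: "Fp n (x + y) = Fp n x + Fp n y" by (induct n) (simp_all add: br_addR)
lemma Fp_sc: "Fp n (sc c x) = sc c (Fp n x)" by (induct n) (simp_all add: br_scR)
lemma Fp_0: "Fp n 0 = 0" by (induct n) simp_all
lemma Fp_sum: "Fp n (sum g S) = sum (\<lambda>i. Fp n (g i)) S"
proof (induct S rule: infinite_finite_induct)
  case (infinite A) thus ?case by (induct n) simp_all
next
  case empty thus ?case by (induct n) simp_all
next
  case (insert a F) thus ?case by (simp add: Fp_add)
qed

lemma D_gt: "n + tt \<le> a \<Longrightarrow> (\<forall>q<length r. tt + n \<le> r ! q) \<Longrightarrow> br (Y 2) (Fp n (R (a # r))) = 0"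
proof -
  assume a1: "n + tt \<le> a" and a2: "\<forall>q<length r. tt + n \<le> r ! q"
  obtain \<kappa> where k: "Fp n (R (a # r)) - sc \<kappa> (R ((a - n) # r)) \<in> vs.span (Rset n a r)"
    using MS[of n a r] a1 by auto
  have 1: "br (Y 2) (Fp n (R (a # r)) - sc \<kappa> (R ((a - n) # r))) = 0"
    by (rule y2_Rset[OF _ a2 k]) (use a1 in simp)
  have "\<forall>i\<in>set ((a - n) # r). tt \<le> i" using a1 a2 by (fastforce simp: in_set_conv_nth)
  hence 2: "br (Y 2) (R ((a - n) # r)) = 0" by (rule y2_R_zero)
  show ?thesis using 1 2 by (simp add: br_diffR br_scR)
qed

lemma D_eq: "n + tt = a + 1 \<Longrightarrow> (\<forall>q<length r. tt + n \<le> r ! q) \<Longrightarrow>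
   \<exists>\<mu>. \<mu> \<noteq> 0 \<and> br (Y 2) (Fp n (R (a # r))) = sc \<mu> (G zeta r)"
proof -
  assume a1: "n + tt = a + 1" and a2: "\<forall>q<length r. tt + n \<le> r ! q"
  obtain \<kappa> where k: "\<kappa> \<noteq> 0" "Fp n (R (a # r)) - sc \<kappa> (R ((a - n) # r)) \<in> vs.span (Rset n a r)"
    using MS[of n a r] a1 by auto
  have 1: "br (Y 2) (Fp n (R (a # r)) - sc \<kappa> (R ((a - n) # r))) = 0"
    by (rule y2_Rset[OF _ a2 k(2)]) (use a1 in simp)
  have an: "a - n = tt - 1" using a1 by simp
  have rr: "\<forall>i\<in>set r. tt \<le> i" using a2 by (fastforce simp: in_set_conv_nth)
  obtain s where s: "s = 1 \<or> s = -1" "br (Y 2) (G (u (tt - 1)) r) = sc s (G (br (Y 2) (u (tt - 1))) r)"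
    using Y2G[OF rr hom_u] by blast
  obtain \<kappa>2 where k2: "\<kappa>2 \<noteq> 0" "br (Y 2) (u (tt - 1)) = sc \<kappa>2 zeta" using Yt by blast
  have 2: "br (Y 2) (R ((a - n) # r)) = sc (s * \<kappa>2) (G zeta r)"
    unfolding an R_Cons s(2) k2(2) G_sc by simp
  have "br (Y 2) (Fp n (R (a # r))) = sc (\<kappa> * (s * \<kappa>2)) (G zeta r)"
    using 1 2 by (simp add: br_diffR br_scR)
  thus ?thesis using k(1) k2(1) s(1) by (intro exI[of _ "\<kappa> * (s * \<kappa>2)"]) auto
qed

lemma GZ: "\<exists>\<kappa>. \<kappa> \<noteq> 0 \<and> G zeta (b # r) = sc \<kappa> (R ((b + tt - 1) # r))"
proof -
  obtain \<kappa> where "\<kappa> \<noteq> 0" "br (u b) zeta = sc \<kappa> (u (b + tt - 1))" using Zb by blast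
  thus ?thesis by (intro exI[of _ \<kappa>]) (simp add: R_Cons G_sc)
qed


fun gapt :: "nat list \<Rightarrow> bool" where
  "gapt [] = True"
| "gapt [x] = True"
| "gapt (x # y # r) = (x + tt \<le> y \<and> gapt (y # r))"

lemma gapt_tl: "gapt (b # r) \<Longrightarrow> gapt r"
  by (cases r) auto

lemma gapt_ge: "gapt (b # r) \<Longrightarrow> \<forall>x\<in>set r. b + tt \<le> x"
proof (induct r arbitrary: b)
  case Nil thus ?case by simp
next
  case (Cons y r)
  hence "b + tt \<le> y" "gapt (y # r)" by simp_all
  moreover have "\<forall>x\<in>set r. y + tt \<le> x" using Cons(1) calculation(2) by blast
  ultimately show ?case by auto
qed

definition Good :: "nat list \<Rightarrow> bool" where
  "Good \<rho> \<longleftrightarrow> (\<exists>a r. \<rho> = a # r \<and> tt \<le> a \<and> gapt r \<and> (\<forall>x\<in>set r. a < x))"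

fun mrg :: "nat list \<Rightarrow> nat list" where
  "mrg (a # b # r) = (b + tt - 1) # r"
| "mrg \<rho> = \<rho>"

lemma Good_mrg: "Good (a # b # r) \<Longrightarrow> Good (mrg (a # b # r))"
proof -
  assume g: "Good (a # b # r)"
  hence "tt \<le> a" "gapt (b # r)" "a < b" unfolding Good_def by auto
  moreover have "\<forall>x\<in>set r. b + tt \<le> x" using gapt_ge calculation(2) by blast
  ultimately show ?thesis unfolding Good_def using gapt_tl tt_ge
    by (intro exI[of _ "b + tt - 1"] exI[of _ r]) auto
qed

lemma mrg_inj: "inj_on mrg {\<rho>. \<exists>b r. \<rho> = a # b # r}"
  by (rule inj_onI) (use tt_ge in auto)

definition Dop where "Dop n x = br (Y 2) (Fp n x)"

lemma Dop_sum: "Dop n (sum g S) = sum (\<lambda>i. Dop n (g i)) S"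
  unfolding Dop_def Fp_sum br_sumR ..
lemma Dop_sc: "Dop n (sc c x) = sc c (Dop n x)"
  unfolding Dop_def Fp_sc br_scR ..

lemma indep: "0 < m \<Longrightarrow> finite S \<Longrightarrow> (\<forall>\<rho>\<in>S. Good \<rho> \<and> length \<rho> = m) \<Longrightarrow>
    (\<Sum>\<rho>\<in>S. sc (cf \<rho>) (R \<rho>)) = 0 \<Longrightarrow> \<forall>\<rho>\<in>S. cf \<rho> = 0"
proof (induct m arbitrary: S cf)
  case 0 thus ?case by simp
next
  case (Suc m)
  show ?case
  proof (rule ccontr)
    assume "\<not> (\<forall>\<rho>\<in>S. cf \<rho> = 0)"
    define S0 where "S0 = {\<rho>\<in>S. cf \<rho> \<noteq> 0}"
    have S0ne: "S0 \<noteq> {}" and S0S: "S0 \<subseteq> S" and finS0: "finite S0"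
      using \<open>\<not> (\<forall>\<rho>\<in>S. cf \<rho> = 0)\<close> Suc(3) unfolding S0_def by auto
    define j where "j = Min (hd ` S0)"
    have jin: "j \<in> hd ` S0" unfolding j_def using S0ne finS0 by (intro Min_in) auto
    have jle: "\<rho> \<in> S0 \<Longrightarrow> j \<le> hd \<rho>" for \<rho> unfolding j_def using finS0 by (intro Min_le) auto
    have gS0: "\<rho> \<in> S0 \<Longrightarrow> Good \<rho> \<and> length \<rho> = Suc m" for \<rho> using S0S Suc(4) by auto
    have jtt: "tt \<le> j"
    proof -
      obtain \<rho> where r: "\<rho> \<in> S0" "j = hd \<rho>" using jin by blast
      obtain a r' where "\<rho> = a # r'" "tt \<le> a" using gS0[OF r(1)] unfolding Good_def by blast
      thus ?thesis using r(2) by simp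
    qed
    define n where "n = j + 1 - tt"
    have sum0: "(\<Sum>\<rho>\<in>S0. sc (cf \<rho>) (R \<rho>)) = 0"
    proof -
      have "(\<Sum>\<rho>\<in>S0. sc (cf \<rho>) (R \<rho>)) = (\<Sum>\<rho>\<in>S. sc (cf \<rho>) (R \<rho>))"
        by (rule sum.mono_neutral_left[OF Suc(3) S0S]) (auto simp: S0_def)
      thus ?thesis using Suc(5) by simp
    qed
    define S1 where "S1 = {\<rho>\<in>S0. hd \<rho> = j}"
    have S1S0: "S1 \<subseteq> S0" unfolding S1_def by auto
    have S1ne: "S1 \<noteq> {}" using jin unfolding S1_def by auto
    have Dgt: "Dop n (R \<rho>) = 0" if "\<rho> \<in> S0 - S1" for \<rho>
    proof -
      have "\<rho> \<in> S0" using that by simp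
      then obtain a r where ar: "\<rho> = a # r" "tt \<le> a" "\<forall>x\<in>set r. a < x" using gS0 unfolding Good_def by blast
      have "j < a" using jle[of \<rho>] that ar(1) unfolding S1_def by auto
      hence "n + tt \<le> a" "\<forall>q<length r. tt + n \<le> r ! q" using ar(3) jtt unfolding n_def
        by (auto simp: all_set_conv_all_nth)
      thus ?thesis unfolding Dop_def ar(1) by (rule D_gt)
    qed
    have Deq: "\<exists>\<mu>. \<mu> \<noteq> 0 \<and> Dop n (R \<rho>) = sc \<mu> (G zeta (tl \<rho>))" if "\<rho> \<in> S1" for \<rho>
    proof -
      have "\<rho> \<in> S0" using that S1S0 by blast
      then obtain a r where ar: "\<rho> = a # r" "tt \<le> a" "\<forall>x\<in>set r. a < x" using gS0 unfolding Good_def by blast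
      have "a = j" using that ar(1) unfolding S1_def by auto
      hence "n + tt = a + 1" "\<forall>q<length r. tt + n \<le> r ! q" using ar(3) jtt unfolding n_def
        by (auto simp: all_set_conv_all_nth)
      thus ?thesis unfolding Dop_def ar(1) by (simp add: D_eq)
    qed
    have sum1: "(\<Sum>\<rho>\<in>S1. sc (cf \<rho>) (Dop n (R \<rho>))) = 0"
    proof -
      have "(\<Sum>\<rho>\<in>S1. sc (cf \<rho>) (Dop n (R \<rho>))) = (\<Sum>\<rho>\<in>S0. sc (cf \<rho>) (Dop n (R \<rho>)))"
        by (rule sum.mono_neutral_left[OF finS0 S1S0]) (simp add: Dgt)
      also have "\<dots> = Dop n (\<Sum>\<rho>\<in>S0. sc (cf \<rho>) (R \<rho>))" by (simp add: Dop_sum Dop_sc)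
      finally show ?thesis using sum0 by (simp add: Dop_def Fp_0)
    qed
    show False
    proof (cases m)
      case 0
      obtain \<rho> where r: "\<rho> \<in> S1" using S1ne by blast
      have S1eq: "S1 = {\<rho>}"
      proof
        show "S1 \<subseteq> {\<rho>}"
        proof
          fix \<sigma> assume s: "\<sigma> \<in> S1"
          have "length \<sigma> = 1" "length \<rho> = 1" "hd \<sigma> = j" "hd \<rho> = j"
            using s r S1S0 gS0 0 unfolding S1_def by (auto simp: One_nat_def)
          thus "\<sigma> \<in> {\<rho>}" by (cases \<sigma>; cases \<rho>) auto
        qed
      qed (use r in simp)
      obtain \<mu> where mu: "\<mu> \<noteq> 0" "Dop n (R \<rho>) = sc \<mu> (G zeta (tl \<rho>))" using Deq[OF r] by blast
      have "length \<rho> = Suc 0" using r S1S0 gS0 0 by blast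
      hence "tl \<rho> = []" by (cases \<rho>) auto
      hence "sc (cf \<rho> * \<mu>) zeta = 0" using sum1 mu unfolding S1eq by simp
      moreover have "cf \<rho> \<noteq> 0" using r S1S0 unfolding S0_def by auto
      ultimately show False using mu(1) zeta_nz by simp
    next
      case (Suc m')
      have ex: "\<forall>\<rho>\<in>S1. \<exists>\<nu>. \<nu> \<noteq> 0 \<and> Dop n (R \<rho>) = sc \<nu> (R (mrg \<rho>))"
      proof
        fix \<rho> assume r: "\<rho> \<in> S1"
        obtain \<mu> where mu: "\<mu> \<noteq> 0" "Dop n (R \<rho>) = sc \<mu> (G zeta (tl \<rho>))" using Deq[OF r] by blast
        have "length \<rho> = Suc (Suc m')" using r S1S0 gS0 Suc by blast
        then obtain a b r' where ar: "\<rho> = a # b # r'"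
          by (cases \<rho>; cases "tl \<rho>") auto
        obtain \<kappa> where k: "\<kappa> \<noteq> 0" "G zeta (b # r') = sc \<kappa> (R ((b + tt - 1) # r'))" using GZ by blast
        show "\<exists>\<nu>. \<nu> \<noteq> 0 \<and> Dop n (R \<rho>) = sc \<nu> (R (mrg \<rho>))"
          using mu k ar by (intro exI[of _ "\<mu> * \<kappa>"]) simp
      qed
      then obtain \<nu> where nu: "\<And>\<rho>. \<rho> \<in> S1 \<Longrightarrow> \<nu> \<rho> \<noteq> 0 \<and> Dop n (R \<rho>) = sc (\<nu> \<rho>) (R (mrg \<rho>))"
        by metis
      have injS1: "inj_on mrg S1"
      proof (rule inj_on_subset[OF mrg_inj[of j]])
        show "S1 \<subseteq> {\<rho>. \<exists>b r. \<rho> = j # b # r}"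
        proof
          fix \<rho> assume r: "\<rho> \<in> S1"
          hence "hd \<rho> = j" unfolding S1_def by auto
          moreover have "length \<rho> = Suc (Suc m')" using r S1S0 gS0 Suc by blast
          ultimately show "\<rho> \<in> {\<rho>. \<exists>b r. \<rho> = j # b # r}" by (cases \<rho>; cases "tl \<rho>") auto
        qed
      qed
      define cf' where "cf' \<tau> = cf (inv_into S1 mrg \<tau>) * \<nu> (inv_into S1 mrg \<tau>)" for \<tau>
      have "(\<Sum>\<tau>\<in>mrg ` S1. sc (cf' \<tau>) (R \<tau>)) = (\<Sum>\<rho>\<in>S1. sc (cf' (mrg \<rho>)) (R (mrg \<rho>)))"
        by (rule sum.reindex[OF injS1, unfolded comp_def])
      also have "\<dots> = (\<Sum>\<rho>\<in>S1. sc (cf \<rho>) (Dop n (R \<rho>)))"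
        by (rule sum.cong[OF refl]) (simp add: cf'_def inv_into_f_f[OF injS1] nu)
      finally have z: "(\<Sum>\<tau>\<in>mrg ` S1. sc (cf' \<tau>) (R \<tau>)) = 0" using sum1 by simp
      have gm: "\<forall>\<tau>\<in>mrg ` S1. Good \<tau> \<and> length \<tau> = m"
      proof
        fix \<tau> assume "\<tau> \<in> mrg ` S1"
        then obtain \<rho> where r: "\<rho> \<in> S1" "\<tau> = mrg \<rho>" by blast
        have g: "Good \<rho>" "length \<rho> = Suc (Suc m')" using r S1S0 gS0 Suc by auto
        then obtain a b r' where ar: "\<rho> = a # b # r'" by (cases \<rho>; cases "tl \<rho>") auto
        show "Good \<tau> \<and> length \<tau> = m" using Good_mrg g r(2) ar Suc by simp
      qed
      have "\<forall>\<tau>\<in>mrg ` S1. cf' \<tau> = 0"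
        by (rule Suc.hyps[OF _ _ gm z]) (use Suc finite_subset[OF S1S0 finS0] in simp_all)
      moreover obtain \<rho> where r: "\<rho> \<in> S1" using S1ne by blast
      ultimately have "cf \<rho> * \<nu> \<rho> = 0" by (auto simp: cf'_def inv_into_f_f[OF injS1])
      moreover have "cf \<rho> \<noteq> 0" using r S1S0 unfolding S0_def by auto
      ultimately show False using nu[OF r] by simp
    qed
  qed
qed


section \<open>Degrees\<close>

abbreviation deg where "deg \<equiv> deg_elem br H X Y"

lemma deg_u: "deg (int k + 1) (u k)"
proof (induct k)
  case 0 show ?case unfolding u0 using deg_X[of 2 br H X Y] by simp
next
  case (Suc k)
  have "deg (1 + (int k + 1)) (br (X 1) (u k))" by (rule deg_br[OF deg_X Suc]) simp
  thus ?case by (simp add: uS add.commute)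
qed

lemma deg_G: "deg d z \<Longrightarrow> deg (d + int (sum_list r + length r)) (G z r)"
proof (induct r arbitrary: d z)
  case Nil thus ?case by simp
next
  case (Cons i r)
  have "deg ((int i + 1) + d) (br (u i) z)" by (rule deg_br[OF deg_u Cons(2)])
  from Cons(1)[OF this] show ?case by (simp add: algebra_simps)
qed

lemma deg_R: "deg (int (sum_list (a # r) + length (a # r))) (R (a # r))"
  using deg_G[OF deg_u, of a r] by (simp add: R_Cons algebra_simps)

section \<open>The counting family\<close>

primrec mk :: "nat \<Rightarrow> nat \<Rightarrow> nat list \<Rightarrow> nat list" where
  "mk B c [] = []"
| "mk B c (x # xs) = (c + x) # mk B (c + B) xs"

lemma mk_len: "length (mk B c xs) = length xs" by (induct xs arbitrary: c) simp_all

lemma mk_ge: "\<forall>z\<in>set (mk B c xs). c \<le> z"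
  by (induct xs arbitrary: c) (auto, fastforce)

lemma mk_le: "\<forall>x\<in>set xs. x < N \<Longrightarrow> \<forall>z\<in>set (mk B c xs). z \<le> c + length xs * B + N"
proof (induct xs arbitrary: c)
  case Nil thus ?case by simp
next
  case (Cons x xs)
  have "\<forall>z\<in>set (mk B (c + B) xs). z \<le> (c + B) + length xs * B + N" using Cons by simp
  thus ?case using Cons(2) by auto
qed

lemma mk_gapt: "N + tt \<le> B \<Longrightarrow> \<forall>x\<in>set xs. x < N \<Longrightarrow> gapt (mk B c xs)"
proof (induct xs arbitrary: c)
  case Nil thus ?case by simp
next
  case (Cons x xs)
  show ?case
  proof (cases xs)
    case Nil thus ?thesis by simp
  next
    case (Cons y ys)
    have "gapt (mk B (c + B) xs)" using Cons.hyps[of "c+B"] \<open>N + tt \<le> B\<close> \<open>\<forall>x\<in>set (x # xs). x < N\<close> by simp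
    moreover have "c + x + tt \<le> c + B + y" using \<open>N + tt \<le> B\<close> \<open>\<forall>x\<in>set (x # xs). x < N\<close> by simp
    ultimately show ?thesis using Cons by simp
  qed
qed

lemma mk_inj: "mk B c xs = mk B c ys \<Longrightarrow> xs = ys"
proof (induct xs arbitrary: c ys)
  case Nil thus ?case by (cases ys) simp_all
next
  case (Cons x xs) thus ?case by (cases ys) auto
qed

lemma mk_sum: "sum_list (mk B c xs) = sum_list (mk B c (replicate (length xs) 0)) + sum_list xs"
  by (induct xs arbitrary: c) simp_all

lemma sum_list_le: "\<forall>x\<in>set xs. x \<le> K \<Longrightarrow> sum_list xs \<le> length xs * K"
  by (induct xs) auto


lemma family:
  assumes N1: "1 \<le> N" and k1: "1 \<le> k"
  shows "\<exists>S M. finite S \<and> card S = N ^ k \<and> (\<forall>\<rho>\<in>S. Good \<rho> \<and> length \<rho> = Suc k \<and> sum_list \<rho> + length \<rho> = M)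
     \<and> M + 1 \<le> (k * (k + 2) * (k + tt + 2) + k + (k + tt + 2)) * N"
proof -
  define Q where "Q = k + tt + 2"
  define B where "B = N + tt"
  define b where "b = k * N + tt + 1"
  define Z where "Z = mk B b (replicate k 0)"
  define T where "T = sum_list Z + k * N + tt"
  define \<rho> where "\<rho> xs = (T - sum_list (mk B b xs)) # mk B b xs" for xs
  define Xs where "Xs = {xs. set xs \<subseteq> {..<N} \<and> length xs = k}"
  have finXs: "finite Xs" unfolding Xs_def by (rule finite_lists_length_eq) simp
  have cardXs: "card Xs = N ^ k" unfolding Xs_def using card_lists_length_eq[of "{..<N}" k] by simp
  have sxs: "sum_list xs \<le> k * (N - 1)" if "xs \<in> Xs" for xs
  proof -
    have "\<forall>x\<in>set xs. x \<le> N - 1" using that unfolding Xs_def by auto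
    from sum_list_le[OF this] show ?thesis using that unfolding Xs_def by simp
  qed
  have smk: "sum_list (mk B b xs) = sum_list Z + sum_list xs" if "xs \<in> Xs" for xs
    using mk_sum[of B b xs] that unfolding Z_def Xs_def by simp
  have kN: "k * (N - 1) + k \<le> k * N" using N1 by (simp add: algebra_simps diff_mult_distrib2)
  have good: "Good (\<rho> xs) \<and> length (\<rho> xs) = Suc k \<and> sum_list (\<rho> xs) + length (\<rho> xs) = T + Suc k" if xs: "xs \<in> Xs" for xs
  proof -
    have lt: "\<forall>x\<in>set xs. x < N" using xs unfolding Xs_def by auto
    have hd: "T - sum_list (mk B b xs) = k * N + tt - sum_list xs" unfolding T_def smk[OF xs] by simp
    have h1: "tt \<le> T - sum_list (mk B b xs)" unfolding hd using sxs[OF xs] kN by linarith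
    have "k * N + tt - sum_list xs < b" unfolding b_def by linarith
    hence h2: "T - sum_list (mk B b xs) < b" using hd by simp
    have "Good (\<rho> xs)" unfolding Good_def \<rho>_def
    proof (intro exI conjI)
      show "gapt (mk B b xs)" by (rule mk_gapt[OF _ lt]) (simp add: B_def)
      show "\<forall>x\<in>set (mk B b xs). T - sum_list (mk B b xs) < x" using mk_ge[of B b xs] h2 by auto
    qed (use h1 in simp_all)
    moreover have "length (\<rho> xs) = Suc k" using xs unfolding \<rho>_def Xs_def by (simp add: mk_len)
    moreover have "sum_list (\<rho> xs) = T" unfolding \<rho>_def using hd smk[OF xs] sxs[OF xs] kN
      unfolding T_def by simp
    ultimately show ?thesis by simp
  qed
  have inj: "inj_on \<rho> Xs" unfolding \<rho>_def by (rule inj_onI) (auto dest: mk_inj)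
  have sZ: "sum_list Z \<le> k * (b + k * B + 1)"
  proof -
    have "\<forall>z\<in>set Z. z \<le> b + k * B + 1" using mk_le[of "replicate k 0" 1 B b] unfolding Z_def by simp
    from sum_list_le[OF this] show ?thesis unfolding Z_def by (simp add: mk_len)
  qed
  have QN: "c \<le> Q \<Longrightarrow> c \<le> Q * N" for c using N1 by (metis le_trans mult.right_neutral mult_le_mono2)
  have bQ: "b \<le> Q * N"
  proof -
    have "(tt + 1) * 1 \<le> (tt + 1) * N" using N1 by (rule mult_le_mono2)
    hence "b \<le> (k + tt + 1) * N" unfolding b_def by (simp add: algebra_simps)
    also have "\<dots> \<le> Q * N" unfolding Q_def by (intro mult_le_mono1) simp
    finally show ?thesis .
  qed
  have BQ: "B \<le> Q * N"
  proof -
    have "tt * 1 \<le> tt * N" using N1 by (rule mult_le_mono2)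
    hence "B \<le> (tt + 1) * N" unfolding B_def by (simp add: algebra_simps)
    also have "\<dots> \<le> Q * N" unfolding Q_def by (intro mult_le_mono1) simp
    finally show ?thesis .
  qed
  have "k * (b + k * B + 1) \<le> k * (Q * N + k * (Q * N) + Q * N)"
    using bQ BQ QN[of 1] by (intro mult_le_mono2 add_mono mult_le_mono2) (simp_all add: Q_def)
  also have "\<dots> = k * (k + 2) * Q * N" by (simp add: algebra_simps)
  finally have sZ2: "sum_list Z \<le> k * (k + 2) * Q * N" using sZ by linarith
  have "T + Suc k + 1 = sum_list Z + k * N + (tt + k + 2)" unfolding T_def by simp
  also have "\<dots> \<le> k * (k + 2) * Q * N + k * N + Q * N" using sZ2 QN[of "tt + k + 2"] by (simp add: Q_def)
  also have "\<dots> = (k * (k + 2) * Q + k + Q) * N" by (simp add: algebra_simps)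
  finally have bound: "T + Suc k + 1 \<le> (k * (k + 2) * (k + tt + 2) + k + (k + tt + 2)) * N" unfolding Q_def .
  have c1: "finite (\<rho> ` Xs)" using finXs by simp
  have c2: "card (\<rho> ` Xs) = N ^ k" using card_image[OF inj] cardXs by simp
  have c3: "\<forall>\<sigma>\<in>\<rho> ` Xs. Good \<sigma> \<and> length \<sigma> = Suc k \<and> sum_list \<sigma> + length \<sigma> = T + Suc k"
    using good by blast
  show ?thesis using c1 c2 c3 bound by blast
qed


lemma lower:
  assumes N1: "1 \<le> N" and k1: "1 \<le> k"
    and fin: "\<And>m. \<exists>B. finite B \<and> graded_piece sc br H X Y m \<subseteq> vs.span B"
  shows "\<exists>M. N ^ k \<le> vs.dim (graded_piece sc br H X Y (int M)) \<and>
           M + 1 \<le> (k * (k + 2) * (k + tt + 2) + k + (k + tt + 2)) * N"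
proof -
  obtain S M where S: "finite S" "card S = N ^ k"
    "\<forall>\<rho>\<in>S. Good \<rho> \<and> length \<rho> = Suc k \<and> sum_list \<rho> + length \<rho> = M"
    "M + 1 \<le> (k * (k + 2) * (k + tt + 2) + k + (k + tt + 2)) * N"
    using family[OF N1 k1] by blast
  define V where "V = graded_piece sc br H X Y (int M)"
  have ind: "\<And>S' cf. S' \<subseteq> S \<Longrightarrow> (\<Sum>\<rho>\<in>S'. sc (cf \<rho>) (R \<rho>)) = 0 \<Longrightarrow> \<forall>\<rho>\<in>S'. cf \<rho> = 0"
  proof -
    fix S' cf assume a: "S' \<subseteq> S" "(\<Sum>\<rho>\<in>S'. sc (cf \<rho>) (R \<rho>)) = 0"
    show "\<forall>\<rho>\<in>S'. cf \<rho> = 0"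
      by (rule indep[of "Suc k"]) (use a S(1,3) finite_subset in auto)
  qed
  have injR: "inj_on R S"
  proof (rule inj_onI, rule ccontr)
    fix x y assume xy: "x \<in> S" "y \<in> S" "R x = R y" "x \<noteq> y"
    have "(\<Sum>\<rho>\<in>{x,y}. sc (if \<rho> = x then 1 else -1) (R \<rho>)) = 0" using xy by simp
    from ind[OF _ this] xy show False by auto
  qed
  have indepRS: "vs.independent (R ` S)"
    unfolding vs.dependent_explicit
  proof
    assume "\<exists>t u. finite t \<and> t \<subseteq> R ` S \<and> (\<Sum>v\<in>t. sc (u v) v) = 0 \<and> (\<exists>v\<in>t. u v \<noteq> 0)"
    then obtain t u v where t: "finite t" "t \<subseteq> R ` S" "(\<Sum>v\<in>t. sc (u v) v) = 0" "v \<in> t" "u v \<noteq> 0" by blast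
    define St where "St = {\<rho>\<in>S. R \<rho> \<in> t}"
    have tSt: "t = R ` St" using t(2) unfolding St_def by auto
    have injSt: "inj_on R St" using injR unfolding St_def by (rule inj_on_subset) auto
    have "(\<Sum>\<rho>\<in>St. sc (u (R \<rho>)) (R \<rho>)) = 0"
      using t(3) unfolding tSt sum.reindex[OF injSt] by (simp add: comp_def)
    from ind[OF _ this] have "\<forall>\<rho>\<in>St. u (R \<rho>) = 0" unfolding St_def by auto
    thus False using t(4,5) unfolding tSt by auto
  qed
  have sub: "R ` S \<subseteq> V"
  proof
    fix x assume "x \<in> R ` S"
    then obtain \<rho> where r: "\<rho> \<in> S" "x = R \<rho>" by blast
    obtain a r' where ar: "\<rho> = a # r'" using S(3) r(1) unfolding Good_def by blast
    have "deg (int M) (R \<rho>)" using deg_R[of a r'] S(3) r(1) ar by auto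
    thus "x \<in> V" unfolding V_def graded_piece_def using r(2) by (intro vs.span_base) simp
  qed
  obtain Bf where Bf: "finite Bf" "V \<subseteq> vs.span Bf" using fin[of "int M"] unfolding V_def by blast
  obtain A where A: "A \<subseteq> V" "vs.independent A" "V \<subseteq> vs.span A" "card A = vs.dim V"
    by (rule vs.basis_exists)
  have finA: "finite A" using vs.independent_span_bound[OF Bf(1) A(2)] A(1) Bf(2) by auto
  have "card (R ` S) \<le> card A"
    using vs.independent_span_bound[OF finA indepRS] sub A(3) by auto
  moreover have "card (R ` S) = N ^ k" using card_image[OF injR] S(2) by simp
  ultimately show ?thesis using A(4) S(4) unfolding V_def by (intro exI[of _ M]) auto
qed

theorem main: "infinite_growth sc br H X Y"
  unfolding infinite_growth_def
proof
  assume "\<exists>C::real. \<exists>d::nat. \<forall>m::int.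
          (\<exists>B. finite B \<and> graded_piece sc br H X Y m \<subseteq> module.span sc B) \<and>
          real (vector_space.dim sc (graded_piece sc br H X Y m)) \<le> C * (1 + real_of_int \<bar>m\<bar>) ^ d"
  then obtain C :: real and d :: nat where Cd: "\<And>m. (\<exists>B. finite B \<and> graded_piece sc br H X Y m \<subseteq> vs.span B)"
     "\<And>m. real (vs.dim (graded_piece sc br H X Y m)) \<le> C * (1 + real_of_int \<bar>m\<bar>) ^ d"
    by blast
  define k where "k = Suc d"
  define L where "L = k * (k + 2) * (k + tt + 2) + k + (k + tt + 2)"
  define N where "N = nat \<lceil>C * real L ^ d\<rceil> + 1"
  have N1: "1 \<le> N" unfolding N_def by simp
  have NC: "C * real L ^ d < real N" unfolding N_def by linarith
  obtain M where M: "N ^ k \<le> vs.dim (graded_piece sc br H X Y (int M))" "M + 1 \<le> L * N"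
    using lower[OF N1 _ Cd(1), of k] unfolding k_def L_def by auto
  have M1: "real (N ^ k) \<le> real (vs.dim (graded_piece sc br H X Y (int M)))" using M(1) by (rule of_nat_mono)
  have M2: "real_of_int \<bar>int M\<bar> = real M" by simp
  have NkC: "real N ^ k \<le> C * (1 + real M) ^ d"
    using M1 Cd(2)[of "int M"] unfolding M2 of_nat_power by (rule order_trans)
  have Npos: "0 < real N" using N1 by simp
  have pos1: "0 < real N ^ k" using Npos by simp
  have pos2: "0 < (1 + real M) ^ d" by simp
  have C0: "0 \<le> C"
  proof (rule ccontr)
    assume "\<not> 0 \<le> C"
    hence "C * (1 + real M) ^ d < 0" using pos2 by (simp add: mult_neg_pos)
    thus False using NkC pos1 by linarith
  qed
  have hML: "1 + real M \<le> real L * real N"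
  proof -
    have "real (M + 1) \<le> real (L * N)" using M(2) by (rule of_nat_mono)
    thus ?thesis by simp
  qed
  have "(1 + real M) ^ d \<le> (real L * real N) ^ d"
    using hML by (intro power_mono) simp_all
  hence "C * (1 + real M) ^ d \<le> C * (real L ^ d * real N ^ d)"
    using C0 by (simp add: mult_left_mono power_mult_distrib)
  hence "real N * real N ^ d \<le> (C * real L ^ d) * real N ^ d"
    using NkC unfolding k_def by (simp add: algebra_simps)
  hence "real N \<le> C * real L ^ d" using Npos by (simp add: mult_le_cancel_right)
  thus False using NC by simp
qed
end

theorem lemma3p3:
  fixes sc :: "complex \<Rightarrow> 'a::ab_group_add \<Rightarrow> 'a"
    and br :: "'a \<Rightarrow> 'a \<Rightarrow> 'a"
    and E Od H :: "'a set"
    and A :: "nat \<Rightarrow> nat \<Rightarrow> complex"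
    and p :: "nat \<Rightarrow> bool"
    and \<alpha> :: "nat \<Rightarrow> 'a \<Rightarrow> complex"
    and hh X Y :: "nat \<Rightarrow> 'a"
  assumes "is_contragredient2 sc br E Od A p H \<alpha> hh X Y"
    and "A 1 2 * A 2 1 \<noteq> 0"
    and "\<forall>m::nat. ((\<lambda>v. br (X 1) v) ^^ m) (X 2) \<noteq> 0"
  shows "infinite_growth sc br H X Y"
proof -
  interpret G2 sc br E Od H A p \<alpha> hh X Y using assms by unfold_locales
  show ?thesis by (rule main)
qed

end
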